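(* Let $N$ and $M$ be large positive parameters, let $\mathcal{X}$ be any subset of $\{1,2,\ldots,10^M\}$, and let $\Delta=\Delta(N)$ be any function with $\Delta\to\infty$. Then for $\pi(N)\bigl(1+O(1/\Delta)\bigr)$ primes $p\le N$ we have $$\#\{x \bmod p \;:\; x\in\mathcal{X}\}=|\mathcal{X}|+O\!\left(\frac{|\mathcal{X}|}{1+\frac{\pi(N)\log M}{M|\mathcal{X}|\Delta}}\right).$$ That is, the number of primes $p\le N$ for which this estimate holds (with an absolute implied constant) is $\pi(N)(1+O(1/\Delta))$.
   Context: $\pi(N)$ denotes the number of primes $p\le N$. $\#\{x \bmod p : x\in\mathcal{X}\}$ is the number of distinct residues modulo $p$ of elements of $\mathcal{X}$. *)

theory Defs
  imports "HOL-Computational_Algebra.Primes" Complex_Main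
begin

definition prime_pi :: "nat \<Rightarrow> nat" where
  "prime_pi N = card {p::nat. prime p \<and> p \<le> N}"

definition num_residues :: "nat set \<Rightarrow> nat \<Rightarrow> nat" where
  "num_residues X p = card ((\<lambda>x. x mod p) ` X)"

end

theory Submission imports Defs begin

lemma prod_primes_dvd:
  fixes d :: nat
  assumes "finite S" "\<And>p. p \<in> S \<Longrightarrow> prime p \<and> p dvd d"
  shows "\<Prod>S dvd d"
  using assms
proof (induction S rule: finite_induct)
  case empty then show ?case by simp
next
  case (insert p S)
  have pd: "prime p" "p dvd d" using insert.prems by auto
  have "\<not> p dvd \<Prod>S"
  proof
    assume "p dvd \<Prod>S"
    then obtain q where "q \<in> S" "p dvd q" using prime_dvd_prod_iff[of S p "\<lambda>x. x"] insert pd by auto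
    then have "p = q" using insert.prems[of q] pd by (simp add: primes_dvd_imp_eq)
    with \<open>q \<in> S\<close> insert.hyps show False by simp
  qed
  then have "coprime p (\<Prod>S)" using pd prime_imp_coprime by blast
  moreover have "\<Prod>S dvd d" using insert by auto
  ultimately have "p * \<Prod>S dvd d" using pd(2) by (intro divides_mult) auto
  then show ?case using insert.hyps by simp
qed

lemma omega_bound:
  fixes d M :: nat
  assumes "0 < d" "d \<le> 10^M" "M \<ge> 2"
  shows "real (card {p. prime p \<and> p dvd d}) \<le> 11 * M / ln M"
proof -
  define S where "S = {p. prime p \<and> p dvd d}"
  have "S \<subseteq> {..d}" unfolding S_def using assms(1) by (auto intro: dvd_imp_le)
  then have finS: "finite S" using finite_atMost finite_subset by blast
  define S1 where "S1 = {p\<in>S. real p < sqrt M}"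
  define S2 where "S2 = {p\<in>S. \<not> real p < sqrt M}"
  have lnM: "ln (real M) > 0" using assms(3) by simp
  have Mpos: "real M > 0" using assms(3) by simp
  have "S1 \<subseteq> {..nat \<lfloor>sqrt M\<rfloor>}" unfolding S1_def
    by (auto simp: le_nat_iff le_floor_iff)
  then have c1: "card S1 \<le> nat \<lfloor>sqrt M\<rfloor> + 1"
    using card_mono[OF finite_atMost] by fastforce
  have "real (nat \<lfloor>sqrt M\<rfloor>) \<le> sqrt M" by simp
  with c1 have c1': "real (card S1) \<le> sqrt M + 1" by linarith
  have fin2: "finite S2" using finS unfolding S2_def by simp
  have "\<Prod>S2 dvd d" using fin2 by (intro prod_primes_dvd) (auto simp: S2_def S_def)
  then have "\<Prod>S2 \<le> d" using assms(1) by (simp add: dvd_imp_le)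
  then have pd: "real (\<Prod>S2) \<le> 10 ^ M" using assms(2)
    by (metis of_nat_le_iff of_nat_numeral of_nat_power order_trans)
  have "(\<Prod>p\<in>S2. sqrt M) \<le> (\<Prod>p\<in>S2. real p)"
    by (intro prod_mono) (auto simp: S2_def)
  then have "sqrt M ^ card S2 \<le> 10 ^ M" using pd by (simp add: of_nat_prod)
  then have "ln (sqrt M ^ card S2) \<le> ln (10 ^ M)"
    using Mpos by (subst ln_le_cancel_iff) auto
  then have "card S2 * (ln M / 2) \<le> M * ln 10"
    using Mpos by (simp add: ln_realpow ln_sqrt)
  moreover have "ln (10::real) < 4"
  proof -
    have "ln (10::real) < ln 16" by simp
    also have "ln (16::real) = 4 * ln 2"
      using ln_realpow[of 2 4] by simp
    finally show ?thesis using ln_2_less_1 by simp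
  qed
  then have "real M * ln 10 \<le> real M * 4" using Mpos by (intro mult_left_mono) auto
  ultimately have "real (card S2) * (ln M / 2) \<le> real M * 4" by linarith
  then have c2: "real (card S2) \<le> 8 * M / ln M" using lnM
    by (simp add: field_simps)
  have "ln (real M) = 2 * ln (sqrt M)" using Mpos by (simp add: ln_sqrt)
  also have "\<dots> \<le> 2 * (sqrt M - 1)" using ln_le_minus_one[of "sqrt M"] Mpos by simp
  finally have "ln M \<le> 2 * sqrt M - 2" by simp
  then have "sqrt M * ln M \<le> sqrt M * (2 * sqrt M - 2)"
    by (intro mult_left_mono) auto
  also have "\<dots> = 2 * M - 2 * sqrt M" using Mpos by (simp add: algebra_simps)
  finally have "sqrt M * ln M \<le> 2 * M" using real_sqrt_ge_zero[of M] by linarith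
  then have s1: "sqrt M \<le> 2 * M / ln M" using lnM by (simp add: field_simps)
  have "ln M \<le> M" using ln_less_self[of "real M"] Mpos by linarith
  then have o1: "1 \<le> M / ln M" using lnM by (simp add: field_simps)
  have "S = S1 \<union> S2" "S1 \<inter> S2 = {}" unfolding S1_def S2_def by auto
  then have "card S = card S1 + card S2" using finS
    by (metis card_Un_disjoint finite_Un)
  then have "real (card S) \<le> sqrt M + 1 + 8 * M / ln M" using c1' c2 by simp
  also have "\<dots> \<le> 11 * M / ln M"
  proof -
    have "11 * M / ln M = M / ln M + 2 * M / ln M + 8 * M / ln M" by (simp add: field_simps)
    then show ?thesis using s1 o1 by linarith
  qed
  finally show ?thesis unfolding S_def .
qed

lemma card_filter_real:
  assumes "finite A"
  shows "real (card {x\<in>A. P x}) = (\<Sum>x\<in>A. if P x then 1 else 0)"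
proof -
  have "real (card {x\<in>A. P x}) = (\<Sum>x\<in>{x\<in>A. P x}. 1)" by simp
  also have "\<dots> = (\<Sum>x\<in>A. if P x then 1 else 0)" using assms by (rule sum.inter_filter)
  finally show ?thesis .
qed

lemma deficit:
  fixes X :: "nat set" and p :: nat
  assumes "finite X"
  shows "card X \<le> num_residues X p + card {q \<in> X \<times> X. fst q < snd q \<and> p dvd snd q - fst q}"
proof -
  define f where "f = (\<lambda>x::nat. x mod p)"
  define B where "B = {x\<in>X. \<exists>y\<in>X. y < x \<and> y mod p = x mod p}"
  define Pr where "Pr = {q \<in> X \<times> X. fst q < snd q \<and> p dvd snd q - fst q}"
  have inj: "inj_on f (X - B)"
  proof (rule inj_onI)
    fix a b assume a: "a \<in> X - B" and b: "b \<in> X - B" and e: "f a = f b"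
    show "a = b"
    proof (rule ccontr)
      assume "a \<noteq> b"
      then have "a < b \<or> b < a" by arith
      then show False
        using a b e unfolding B_def f_def by auto
    qed
  qed
  have "card (X - B) = card (f ` (X - B))" using inj by (simp add: card_image)
  also have "\<dots> \<le> card (f ` X)" using assms by (intro card_mono) auto
  finally have c1: "card (X - B) \<le> num_residues X p" unfolding num_residues_def f_def .
  have BX: "B \<subseteq> X" unfolding B_def by auto
  have "B \<subseteq> snd ` Pr"
  proof
    fix x assume "x \<in> B"
    then obtain y where y: "x \<in> X" "y \<in> X" "y < x" "y mod p = x mod p" unfolding B_def by auto
    then have "p dvd x - y" using mod_eq_dvd_iff_nat[of y x p] by simp
    then have "(y, x) \<in> Pr" unfolding Pr_def using y by auto
    then show "x \<in> snd ` Pr" by force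
  qed
  moreover have fP: "finite Pr" unfolding Pr_def using assms by auto
  ultimately have "card B \<le> card (snd ` Pr)" by (intro card_mono) auto
  then have c2: "card B \<le> card Pr" using card_image_le[OF fP, of snd] by linarith
  have "card X = card (X - B) + card B" using BX assms
    using card_Diff_subset[OF finite_subset[OF BX assms] BX] card_mono[OF assms BX] by linarith
  then show ?thesis using c1 c2 unfolding Pr_def by linarith
qed


lemma sum_deficit:
  fixes X P :: "nat set" and M :: nat
  assumes "finite P" "\<And>p. p \<in> P \<Longrightarrow> prime p" "X \<subseteq> {1..10^M}" "M \<ge> 2"
  shows "(\<Sum>p\<in>P. real (card X) - real (num_residues X p)) \<le> real (card X)^2 * (11 * real M / ln M)"
proof -
  have fX: "finite X" using assms(3) finite_subset by blast
  define Q where "Q = {q \<in> X \<times> X. fst q < snd q}"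
  have fQ: "finite Q" unfolding Q_def using fX by auto
  define K where "K = 11 * real M / ln M"
  have K0: "K \<ge> 0" unfolding K_def using assms(4) by simp
  have step1: "real (card X) - real (num_residues X p)
      \<le> (\<Sum>q\<in>Q. if p dvd snd q - fst q then 1 else 0)" for p
  proof -
    have "{q \<in> X \<times> X. fst q < snd q \<and> p dvd snd q - fst q} = {q\<in>Q. p dvd snd q - fst q}"
      unfolding Q_def by auto
    then have "card X \<le> num_residues X p + card {q\<in>Q. p dvd snd q - fst q}"
      using deficit[OF fX, of p] by simp
    then have "real (card X) - real (num_residues X p) \<le> real (card {q\<in>Q. p dvd snd q - fst q})"
      by linarith
    also have "\<dots> = (\<Sum>q\<in>Q. if p dvd snd q - fst q then 1 else 0)"
      using fQ by (rule card_filter_real)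
    finally show ?thesis .
  qed
  have step2: "(\<Sum>p\<in>P. if p dvd snd q - fst q then 1 else 0) \<le> K" if q: "q \<in> Q" for q
  proof -
    define d where "d = snd q - fst q"
    have d0: "0 < d" and d1: "d \<le> 10^M" using q assms(3) unfolding Q_def d_def by auto
    have "finite {p. prime p \<and> p dvd d}"
    proof -
      have "{p. prime p \<and> p dvd d} \<subseteq> {..d}" using d0 by (auto intro: dvd_imp_le)
      then show ?thesis using finite_atMost finite_subset by blast
    qed
    then have "card {p\<in>P. p dvd d} \<le> card {p. prime p \<and> p dvd d}"
      using assms(2) by (intro card_mono) auto
    then have "real (card {p\<in>P. p dvd d}) \<le> K"
      using omega_bound[OF d0 d1 assms(4)] unfolding K_def by linarith
    then show ?thesis using card_filter_real[OF assms(1), of "\<lambda>p. p dvd d"] unfolding d_def by simp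
  qed
  have "(\<Sum>p\<in>P. real (card X) - real (num_residues X p))
      \<le> (\<Sum>p\<in>P. \<Sum>q\<in>Q. if p dvd snd q - fst q then 1 else 0)"
    by (intro sum_mono step1)
  also have "\<dots> = (\<Sum>q\<in>Q. \<Sum>p\<in>P. if p dvd snd q - fst q then 1 else 0)"
    by (rule sum.swap)
  also have "\<dots> \<le> (\<Sum>q\<in>Q. K)" by (intro sum_mono step2)
  also have "\<dots> = real (card Q) * K" by simp
  also have "\<dots> \<le> real (card X)^2 * K"
  proof -
    have "card Q \<le> card (X \<times> X)" unfolding Q_def using fX by (intro card_mono) auto
    then have "real (card Q) \<le> real (card X)^2" by (simp add: power2_eq_square card_cartesian_product flip: of_nat_mult)
    then show ?thesis using K0 by (rule mult_right_mono)
  qed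
  finally show ?thesis unfolding K_def .
qed


lemma main_bound:
  fixes X :: "nat set" and N M :: nat and D :: real
  assumes X: "X \<subseteq> {1..10^M}" and M2: "M \<ge> 2" and D1: "D \<ge> 1"
  shows "real (card {p::nat. prime p \<and> p \<le> N \<and>
                 \<bar>real (num_residues X p) - real (card X)\<bar>
                   \<le> 4 * real (card X) /
                      (1 + real (prime_pi N) * ln (real M) /
                           (real M * real (card X) * D))})
             \<ge> real (prime_pi N) * (1 - 4 / D)"
proof -
  define P where "P = {p::nat. prime p \<and> p \<le> N}"
  have fP: "finite P" unfolding P_def by auto
  have fX: "finite X" using X finite_subset by blast
  define x where "x = real (card X)"
  define m where "m = real M"
  define L where "L = ln m"
  define pi where "pi = real (card P)"
  define A where "A = pi * L / (m * x * D)"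
  define T where "T = 4 * x / (1 + A)"
  define df where "df = (\<lambda>p. x - real (num_residues X p))"
  have m0: "m > 0" and L0: "L > 0" unfolding m_def L_def using M2 by auto
  have pi0: "pi \<ge> 0" unfolding pi_def by simp
  have x0: "x \<ge> 0" unfolding x_def by simp
  have A0: "A \<ge> 0" unfolding A_def using m0 L0 pi0 x0 D1 by simp
  have nr: "num_residues X p \<le> card X" for p
    unfolding num_residues_def using card_image_le[OF fX] by blast
  have df0: "df p \<ge> 0" for p unfolding df_def x_def using nr[of p] by simp
  have dfx: "df p \<le> x" for p unfolding df_def using x0 by simp
  have absdf: "\<bar>real (num_residues X p) - real (card X)\<bar> = df p" for p
    unfolding df_def x_def using nr[of p] by simp
  define Good where "Good = {p\<in>P. df p \<le> T}"
  define Bad where "Bad = {p\<in>P. \<not> df p \<le> T}"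
  have setG: "{p::nat. prime p \<and> p \<le> N \<and>
                 \<bar>real (num_residues X p) - real (card X)\<bar>
                   \<le> 4 * real (card X) /
                      (1 + real (prime_pi N) * ln (real M) /
                           (real M * real (card X) * D))} = Good"
    unfolding Good_def P_def T_def A_def absdf x_def pi_def L_def m_def prime_pi_def by auto
  have cGB: "card Good + card Bad = card P"
  proof -
    have "Good \<union> Bad = P" "Good \<inter> Bad = {}" unfolding Good_def Bad_def by auto
    then show ?thesis using fP by (metis card_Un_disjoint finite_Un)
  qed
  have piN: "real (prime_pi N) = pi" unfolding pi_def prime_pi_def P_def by simp
  have "real (card Bad) \<le> 4 * pi / D"
  proof (cases "1 + A \<le> 4")
    case True
    have "A * x \<le> 3 * x" using x0 True by (intro mult_right_mono) auto
    then have "T \<ge> x" unfolding T_def using A0 x0 True by (simp add: field_simps)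
    then have "Bad = {}" unfolding Bad_def using dfx order_trans by blast
    then show ?thesis using pi0 D1 by simp
  next
    case False
    then have A3: "A > 3" by simp
    have xpos: "x > 0"
    proof (rule ccontr)
      assume "\<not> x > 0" then have "x = 0" using x0 by simp
      then have "A = 0" unfolding A_def by simp
      then show False using A3 by simp
    qed
    have Tpos: "T > 0" unfolding T_def using xpos A0 by simp
    have fB: "finite Bad" unfolding Bad_def using fP by simp
    have "real (card Bad) * T = (\<Sum>p\<in>Bad. T)" by simp
    also have "\<dots> \<le> (\<Sum>p\<in>Bad. df p)" by (intro sum_mono) (auto simp: Bad_def)
    also have "\<dots> \<le> (\<Sum>p\<in>P. df p)" using fP df0 by (intro sum_mono2) (auto simp: Bad_def)
    also have "\<dots> \<le> x^2 * (11 * m / L)"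
      using sum_deficit[OF fP _ X M2] unfolding df_def x_def m_def L_def P_def by auto
    finally have mk: "real (card Bad) * T \<le> x^2 * (11 * m / L)" .
    define u where "u = x * m / L"
    have u0: "u > 0" unfolding u_def using xpos m0 L0 by simp
    have Au: "A = pi / (u * D)" unfolding A_def u_def using L0 by (simp add: field_simps)
    have "3 < pi / (u * D)" using A3 Au by simp
    then have upi: "3 * (u * D) < pi" using u0 D1 by (simp add: field_simps)
    have "real (card Bad) * (4 * x) \<le> x^2 * (11 * m / L) * (1 + A)"
      using mk A0 unfolding T_def by (simp add: field_simps)
    also have "\<dots> = x * (11 * u * (1 + A))" unfolding u_def by (simp add: power2_eq_square field_simps)
    finally have "x * (real (card Bad) * 4) \<le> x * (11 * u * (1 + A))"
      by (simp add: algebra_simps)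
    then have "real (card Bad) * 4 \<le> 11 * u * (1 + A)" using mult_le_cancel_left_pos[OF xpos] by blast
    also have "11 * u * (1 + A) = 11 * u + 11 * pi / D" unfolding Au using u0 D1 by (simp add: field_simps)
    finally have b1: "real (card Bad) * 4 \<le> 11 * u + 11 * pi / D" .
    have "u < pi / (3 * D)" using upi D1 by (simp add: field_simps)
    then have "real (card Bad) * 4 \<le> 11 * (pi / (3 * D)) + 11 * pi / D" using b1 by linarith
    also have "\<dots> = (44 / 3) * (pi / D)" by (simp add: field_simps)
    finally have "real (card Bad) \<le> (11 / 3) * (pi / D)" by simp
    also have "\<dots> \<le> 4 * (pi / D)" using pi0 D1 by (intro mult_right_mono) auto
    finally show ?thesis by simp
  qed
  then have "real (card Good) \<ge> pi - 4 * pi / D" using cGB unfolding pi_def by linarith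
  then show ?thesis unfolding setG unfolding piN by (simp add: algebra_simps)
qed


theorem theorem2:
  "\<exists>C::real. C > 0 \<and>
     (\<forall>\<Delta>::nat \<Rightarrow> real. filterlim \<Delta> at_top sequentially \<longrightarrow>
       (\<exists>N0 M0::nat. \<forall>N M :: nat. N \<ge> N0 \<longrightarrow> M \<ge> M0 \<longrightarrow>
          (\<forall>X::nat set. X \<subseteq> {1..10^M} \<longrightarrow>
             real (card {p::nat. prime p \<and> p \<le> N \<and>
                 \<bar>real (num_residues X p) - real (card X)\<bar>
                   \<le> C * real (card X) /
                      (1 + real (prime_pi N) * ln (real M) /
                           (real M * real (card X) * \<Delta> N))})
             \<ge> real (prime_pi N) * (1 - C / \<Delta> N))))"
proof -
  have "\<forall>\<Delta>::nat \<Rightarrow> real. filterlim \<Delta> at_top sequentially \<longrightarrow>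
       (\<exists>N0 M0::nat. \<forall>N M :: nat. N \<ge> N0 \<longrightarrow> M \<ge> M0 \<longrightarrow>
          (\<forall>X::nat set. X \<subseteq> {1..10^M} \<longrightarrow>
             real (card {p::nat. prime p \<and> p \<le> N \<and>
                 \<bar>real (num_residues X p) - real (card X)\<bar>
                   \<le> 4 * real (card X) /
                      (1 + real (prime_pi N) * ln (real M) /
                           (real M * real (card X) * \<Delta> N))})
             \<ge> real (prime_pi N) * (1 - 4 / \<Delta> N)))"
  proof (intro allI impI)
    fix \<Delta> :: "nat \<Rightarrow> real"
    assume "filterlim \<Delta> at_top sequentially"
    then have "eventually (\<lambda>n. 1 \<le> \<Delta> n) sequentially" by (simp add: filterlim_at_top)
    then obtain N0 where N0: "\<And>n. n \<ge> N0 \<Longrightarrow> 1 \<le> \<Delta> n" by (auto simp: eventually_sequentially)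
    have "\<forall>N M :: nat. N \<ge> N0 \<longrightarrow> M \<ge> 2 \<longrightarrow>
          (\<forall>X::nat set. X \<subseteq> {1..10^M} \<longrightarrow>
             real (card {p::nat. prime p \<and> p \<le> N \<and>
                 \<bar>real (num_residues X p) - real (card X)\<bar>
                   \<le> 4 * real (card X) /
                      (1 + real (prime_pi N) * ln (real M) /
                           (real M * real (card X) * \<Delta> N))})
             \<ge> real (prime_pi N) * (1 - 4 / \<Delta> N))"
      using main_bound N0 by blast
    then show "\<exists>N0 M0::nat. \<forall>N M :: nat. N \<ge> N0 \<longrightarrow> M \<ge> M0 \<longrightarrow>
          (\<forall>X::nat set. X \<subseteq> {1..10^M} \<longrightarrow>
             real (card {p::nat. prime p \<and> p \<le> N \<and>
                 \<bar>real (num_residues X p) - real (card X)\<bar>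
                   \<le> 4 * real (card X) /
                      (1 + real (prime_pi N) * ln (real M) /
                           (real M * real (card X) * \<Delta> N))})
             \<ge> real (prime_pi N) * (1 - 4 / \<Delta> N))" by blast
  qed
  then show ?thesis by (intro exI[of _ 4]) simp
qed

end
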